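(* Let $m\ge 1$, $n=3m+1$, and $t\ge 1$. Let $X_t=G_{n,t}\setminus N[a_t]$. Then $I(X_t)\simeq S^{2tm-1}$.
   Context: For a finite simple graph $G$, $I(G)$ is its independence complex (simplicial complex on $V(G)$ whose simplices are the independent sets); $N[v]$ is the closed neighbourhood of $v$ and $G\setminus S$ the induced subgraph on $V(G)\setminus S$. For integers $n\ge 2$, $t\ge 0$, the graph $G_{n,t}$ has vertex set $\{a_0,\dots,a_t\}\cup\{b_{i,j},c_{i,j}: 1\le i\le t,\ 1\le j\le n-1\}$, and its edges are exactly: $b_{i,j}\sim b_{i,j+1}$ and $c_{i,j}\sim c_{i,j+1}$ for $1\le i\le t$, $1\le j\le n-2$; $b_{i,n-1}\sim b_{i+1,1}$ and $c_{i,n-1}\sim c_{i+1,1}$ for $1\le i\le t-1$; and $a_{i-1}\sim b_{i,1}$, $a_{i-1}\sim c_{i,1}$, $a_i\sim b_{i,n-1}$, $a_i\sim c_{i,n-1}$ for $1\le i\le t$. (It is the line graph of a row of $t$ $(2n)$-gons.) *)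

theory Defs
  imports "HOL-Analysis.Analysis"
begin

datatype vtx = A nat | B nat nat | C nat nat

definition Gverts :: "nat \<Rightarrow> nat \<Rightarrow> vtx set" where
  "Gverts n t = {A i | i. i \<le> t}
     \<union> {B i j | i j. 1 \<le> i \<and> i \<le> t \<and> 1 \<le> j \<and> j \<le> n - 1}
     \<union> {C i j | i j. 1 \<le> i \<and> i \<le> t \<and> 1 \<le> j \<and> j \<le> n - 1}"

definition Gedge0 :: "nat \<Rightarrow> nat \<Rightarrow> vtx \<Rightarrow> vtx \<Rightarrow> bool" where
  "Gedge0 n t u v \<longleftrightarrow>
     (\<exists>i j. 1 \<le> i \<and> i \<le> t \<and> 1 \<le> j \<and> j \<le> n - 2 \<and>
        ((u = B i j \<and> v = B i (j+1)) \<or> (u = C i j \<and> v = C i (j+1))))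
   \<or> (\<exists>i. 1 \<le> i \<and> i \<le> t - 1 \<and>
        ((u = B i (n-1) \<and> v = B (i+1) 1) \<or> (u = C i (n-1) \<and> v = C (i+1) 1)))
   \<or> (\<exists>i. 1 \<le> i \<and> i \<le> t \<and>
        ((u = A (i-1) \<and> v = B i 1) \<or> (u = A (i-1) \<and> v = C i 1) \<or>
         (u = A i \<and> v = B i (n-1)) \<or> (u = A i \<and> v = C i (n-1))))"

definition Gadj :: "nat \<Rightarrow> nat \<Rightarrow> vtx \<Rightarrow> vtx \<Rightarrow> bool" where
  "Gadj n t u v \<longleftrightarrow> Gedge0 n t u v \<or> Gedge0 n t v u"

definition closed_nbhd :: "'a set \<Rightarrow> ('a \<Rightarrow> 'a \<Rightarrow> bool) \<Rightarrow> 'a \<Rightarrow> 'a set" where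
  "closed_nbhd V E v = {v} \<union> {u \<in> V. E v u}"

text \<open>For an induced subgraph on W \<subseteq> V with the
  restricted edge relation, this is just indep_complex W E.\<close>
definition indep_complex :: "'a set \<Rightarrow> ('a \<Rightarrow> 'a \<Rightarrow> bool) \<Rightarrow> 'a set set" where
  "indep_complex V E = {S. S \<subseteq> V \<and> (\<forall>u\<in>S. \<forall>v\<in>S. \<not> E u v)}"

text \<open>For a finite vertex set this is the standard realization.\<close>
definition geom_realization :: "'a set set \<Rightarrow> ('a \<Rightarrow> real) topology" where
  "geom_realization K = subtopology (powertop_real UNIV)
     {x. (\<forall>v. 0 \<le> x v) \<and> finite {v. x v \<noteq> 0} \<and> {v. x v \<noteq> 0} \<in> K
         \<and> sum x {v. x v \<noteq> 0} = 1}"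

end

theory Submission
  imports Defs
begin

lemma topspace_geom:
  "topspace (geom_realization K) = {x. (\<forall>v. 0 \<le> x v) \<and> finite {v. x v \<noteq> 0} \<and> {v. x v \<noteq> 0} \<in> K
         \<and> sum x {v. x v \<noteq> 0} = 1}"
  by (simp add: geom_realization_def)

lemma coord_cont: "continuous_map (geom_realization K) euclideanreal (\<lambda>x. x v)"
  unfolding geom_realization_def
  by (rule continuous_map_from_subtopology[OF continuous_map_product_projection]) simp

lemma cont_into_geom:
  assumes "\<And>v. continuous_map X euclideanreal (\<lambda>x. f x v)"
    and "\<And>x. x \<in> topspace X \<Longrightarrow> f x \<in> topspace (geom_realization K)"
  shows "continuous_map X (geom_realization K) f"
  unfolding geom_realization_def continuous_map_in_subtopology
  using assms by (auto simp: continuous_map_componentwise_UNIV geom_realization_def)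

lemma in_geom:
  assumes fin: "finite V" and nn: "\<And>v. 0 \<le> y v" and T: "\<And>v. y v \<noteq> 0 \<Longrightarrow> v \<in> T"
    and TV: "T \<subseteq> V" and Tind: "\<forall>u\<in>T. \<forall>v\<in>T. \<not> E u v" and s: "sum y V = 1"
  shows "y \<in> topspace (geom_realization (indep_complex V E))"
proof -
  have sub: "{v. y v \<noteq> 0} \<subseteq> V" using T TV by auto
  have "sum y {v. y v \<noteq> 0} = sum y V"
    by (rule sum.mono_neutral_left[OF fin sub]) auto
  then show ?thesis using s nn sub T Tind finite_subset[OF sub fin]
    by (auto simp: topspace_geom indep_complex_def)
qed

lemma from_geom:
  assumes fin: "finite V" and x: "x \<in> topspace (geom_realization (indep_complex V E))"
  shows "\<forall>v. 0 \<le> x v" "{v. x v \<noteq> 0} \<subseteq> V" "\<forall>u\<in>{v. x v \<noteq> 0}. \<forall>w\<in>{v. x v \<noteq> 0}. \<not> E u w"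
    "sum x V = 1"
proof -
  show "\<forall>v. 0 \<le> x v" "{v. x v \<noteq> 0} \<subseteq> V" "\<forall>u\<in>{v. x v \<noteq> 0}. \<forall>w\<in>{v. x v \<noteq> 0}. \<not> E u w"
    using x by (auto simp: topspace_geom indep_complex_def)
  have sub: "{v. x v \<noteq> 0} \<subseteq> V" using x by (auto simp: topspace_geom indep_complex_def)
  have "sum x {v. x v \<noteq> 0} = sum x V"
    by (rule sum.mono_neutral_left[OF fin sub]) auto
  then show "sum x V = 1" using x by (auto simp: topspace_geom)
qed

lemma retract_lemma:
  fixes V V' :: "'a set" and E and r :: "'a \<Rightarrow> 'a"
  assumes fin: "finite V" and sub: "V' \<subseteq> V" and rV: "\<forall>v\<in>V. r v \<in> V'" and rid: "\<forall>v\<in>V'. r v = v"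
    and sym: "\<forall>x y. E x y \<longrightarrow> E y x"
    and cond: "\<forall>x\<in>V. \<forall>y\<in>V. \<not> E x y \<longrightarrow> \<not> E x (r y) \<and> \<not> E (r x) (r y)"
  shows "geom_realization (indep_complex V E) homotopy_equivalent_space geom_realization (indep_complex V' E)"
proof -
  let ?X = "geom_realization (indep_complex V E)"
  let ?Y = "geom_realization (indep_complex V' E)"
  define R where "R x = (\<lambda>v. if v \<in> V' then (\<Sum>w\<in>{w\<in>V. r w = v}. x w) else 0)" for x :: "'a \<Rightarrow> real"
  have finV': "finite V'" using fin sub finite_subset by blast
  have Rcont: "continuous_map Z euclideanreal (\<lambda>x. R (k x) v)"
    if "\<And>w. continuous_map Z euclideanreal (\<lambda>x. k x w)" for Z k v
    unfolding R_def using that fin by (cases "v \<in> V'") (auto intro!: continuous_intros)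
  have key: "(\<forall>v. 0 \<le> R x v) \<and> (\<forall>v. R x v \<noteq> 0 \<longrightarrow> v \<in> r ` {v. x v \<noteq> 0})
       \<and> sum (R x) V = 1 \<and> sum (R x) V' = 1 \<and> (\<forall>v. R x v \<noteq> 0 \<longrightarrow> v \<in> V')"
    if x: "x \<in> topspace ?X" for x
  proof -
    note xx = from_geom[OF fin x]
    have nn: "\<forall>v. 0 \<le> R x v" using xx(1) by (auto simp: R_def intro: sum_nonneg)
    have supp: "\<forall>v. R x v \<noteq> 0 \<longrightarrow> v \<in> r ` {v. x v \<noteq> 0}"
    proof (intro allI impI)
      fix v assume "R x v \<noteq> 0"
      then obtain w where "w \<in> V" "r w = v" "x w \<noteq> 0"
        by (auto simp: R_def split: if_splits dest: sum.not_neutral_contains_not_neutral)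
      then show "v \<in> r ` {v. x v \<noteq> 0}" by auto
    qed
    have "sum (R x) V' = (\<Sum>v\<in>V'. \<Sum>w\<in>{w\<in>V. r w = v}. x w)"
      by (auto simp: R_def intro: sum.cong)
    also have "\<dots> = sum x V" using sum.group[OF fin finV', of r x] rV by auto
    finally have s1: "sum (R x) V' = 1" using xx(4) by simp
    have "sum (R x) V = sum (R x) V'"
      by (rule sum.mono_neutral_right[OF fin sub]) (auto simp: R_def)
    then show ?thesis using nn supp s1 by (auto simp: R_def split: if_splits)
  qed
  have RY: "R x \<in> topspace ?Y" if x: "x \<in> topspace ?X" for x
  proof -
    note xx = from_geom[OF fin x]
    show ?thesis
    proof (rule in_geom[OF finV', of _ "r ` {v. x v \<noteq> 0}"])
      show "r ` {v. x v \<noteq> 0} \<subseteq> V'" using xx(2) rV by auto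
      show "\<forall>u\<in>r ` {v. x v \<noteq> 0}. \<forall>v\<in>r ` {v. x v \<noteq> 0}. \<not> E u v"
        using xx(2,3) cond by blast
    qed (use key[OF x] in auto)
  qed
  have YX: "topspace ?Y \<subseteq> topspace ?X"
    using sub by (auto simp: topspace_geom indep_complex_def)
  have RYid: "R y = y" if y: "y \<in> topspace ?Y" for y
  proof
    fix v
    note yy = from_geom[OF finV' y]
    show "R y v = y v"
    proof (cases "v \<in> V'")
      case True
      have "(\<Sum>w\<in>{w\<in>V. r w = v}. y w) = (\<Sum>w\<in>{w\<in>V. r w = v}. if w = v then y w else 0)"
        by (rule sum.cong) (use True rid yy(2) sub in auto)
      also have "\<dots> = y v" using True rid sub fin by (auto simp: sum.delta)
      finally have "(\<Sum>w\<in>{w\<in>V. r w = v}. y w) = y v" .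
      then show ?thesis using True by (simp add: R_def)
    next
      case False
      then show ?thesis using yy(2) by (auto simp: R_def)
    qed
  qed
  have f: "continuous_map ?X ?Y R"
    by (rule cont_into_geom) (auto intro!: Rcont coord_cont RY)
  have g: "continuous_map ?Y ?X id"
    by (rule cont_into_geom) (use YX coord_cont in auto)
  have h1: "homotopic_with (\<lambda>x. True) ?X ?X (id \<circ> R) id"
  proof (subst homotopic_with, simp, intro exI conjI)
    let ?h = "\<lambda>(s::real, x). (\<lambda>v. s * x v + (1 - s) * R x v)"
    show "continuous_map (prod_topology (top_of_set {0..1}) ?X) ?X ?h"
    proof (rule cont_into_geom)
      fix v
      have c: "continuous_map (prod_topology (top_of_set {0..1}) ?X) euclideanreal (\<lambda>p. snd p w)" for w
        using continuous_map_compose[OF continuous_map_snd coord_cont] by (simp add: o_def)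
      have c0: "continuous_map (prod_topology (top_of_set {0..1::real}) ?X) euclideanreal fst"
        using continuous_map_into_fulltopology[OF continuous_map_fst] by blast
      show "continuous_map (prod_topology (top_of_set {0..1}) ?X) euclideanreal (\<lambda>x. ?h x v)"
        by (simp add: case_prod_unfold, intro continuous_intros c0 c Rcont)
    next
      fix p assume p: "p \<in> topspace (prod_topology (top_of_set {0..1::real}) ?X)"
      then obtain s x where ps: "p = (s, x)" and s: "0 \<le> s" "s \<le> 1" and x: "x \<in> topspace ?X" by auto
      note xx = from_geom[OF fin x] and kk = key[OF x]
      let ?T = "{v. x v \<noteq> 0} \<union> r ` {v. x v \<noteq> 0}"
      have "?h p \<in> topspace ?X"
        unfolding ps case_prod_conv
      proof (rule in_geom[OF fin, of _ ?T])
        show "\<And>v. 0 \<le> s * x v + (1 - s) * R x v" using s xx(1) kk by auto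
        show "?T \<subseteq> V" using xx(2) rV sub by auto
        show "\<forall>u\<in>?T. \<forall>v\<in>?T. \<not> E u v"
          using xx(2,3) cond sym by blast
        show "\<And>v. s * x v + (1 - s) * R x v \<noteq> 0 \<Longrightarrow> v \<in> ?T" using kk by fastforce
        have "(\<Sum>v\<in>V. s * x v + (1 - s) * R x v) = s * sum x V + (1 - s) * sum (R x) V"
          by (simp add: sum.distrib sum_distrib_left)
        then show "(\<Sum>v\<in>V. s * x v + (1 - s) * R x v) = 1" using xx(4) kk by simp
      qed
      then show "?h p \<in> topspace ?X" .
    qed
  qed auto
  have h2: "homotopic_with (\<lambda>x. True) ?Y ?Y (R \<circ> id) id"
    by (rule homotopic_with_equal) (use continuous_map_compose[OF g f] RYid in auto)
  show ?thesis unfolding homotopy_equivalent_space_def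
    using f g h1 h2 by blast
qed

lemma max_div_aux: assumes c: "(c::real) > 0" shows "max (a / c) 0 / (1 / c) = max a 0"
proof (cases "a \<ge> 0")
  case True
  then have "a / c \<ge> 0" using c by simp
  then show ?thesis using True c by (simp add: max_absorb1)
next
  case False
  then have "a / c < 0" using c by (simp add: divide_neg_pos)
  then show ?thesis using False by (simp add: max_absorb2)
qed

lemma max_div_aux2: assumes c: "(c::real) > 0" shows "max (- (a / c)) 0 / (1 / c) = max (- a) 0"
  using max_div_aux[OF c, of "- a"] by simp

lemma maxL1: "(a::real) \<ge> 0 \<Longrightarrow> b \<ge> 0 \<Longrightarrow> a = 0 \<or> b = 0 \<Longrightarrow> max (a - b) 0 = a"
  by auto

lemma maxL2: "(a::real) \<ge> 0 \<Longrightarrow> b \<ge> 0 \<Longrightarrow> a = 0 \<or> b = 0 \<Longrightarrow> max (- (a - b)) 0 = b"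
  by auto

lemma max_add_aux: "max (a::real) 0 / s + max (- a) 0 / s = \<bar>a\<bar> / s"
proof -
  have "max a 0 + max (- a) 0 = \<bar>a\<bar>" by (simp add: max_def)
  then show ?thesis by (metis add_divide_distrib)
qed

lemma max_diff_aux: "max (a::real) 0 / s - max (- a) 0 / s = a / s"
proof -
  have "max a 0 - max (- a) 0 = a" by (simp add: max_def)
  then show ?thesis by (metis diff_divide_distrib)
qed

lemma indep_aux:
  fixes y :: "nat \<Rightarrow> real"
  assumes PQ: "\<forall>e<K. \<forall>e'<K. P e \<noteq> Q e'" and injP: "inj_on P {..<K}" and injQ: "inj_on Q {..<K}"
    and u: "u \<in> P ` {e. e < K \<and> y e > 0} \<union> Q ` {e. e < K \<and> y e < 0}"
    and v: "v \<in> P ` {e. e < K \<and> y e > 0} \<union> Q ` {e. e < K \<and> y e < 0}"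
    and e: "e < K" "(u = P e \<and> v = Q e) \<or> (u = Q e \<and> v = P e)"
  shows False
proof -
  have PQ2: "\<forall>e<K. \<forall>e'<K. Q e' \<noteq> P e" using PQ by metis
  have TP: "y e > 0" if a: "P e \<in> P ` {e. e < K \<and> y e > 0} \<union> Q ` {e. e < K \<and> y e < 0}"
  proof -
    from a obtain e1 where "e1 < K" "(P e = P e1 \<and> y e1 > 0) \<or> (P e = Q e1 \<and> y e1 < 0)" by auto
    then show ?thesis using PQ e(1) injP by (auto dest: inj_onD)
  qed
  have TQ: "y e < 0" if a: "Q e \<in> P ` {e. e < K \<and> y e > 0} \<union> Q ` {e. e < K \<and> y e < 0}"
  proof -
    from a obtain e1 where "e1 < K" "(Q e = P e1 \<and> y e1 > 0) \<or> (Q e = Q e1 \<and> y e1 < 0)" by auto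
    then show ?thesis using PQ2 e(1) injQ by (auto dest: inj_onD)
  qed
  show False using e(2) u v TP TQ by auto
qed

lemma matching_sphere:
  fixes P Q :: "nat \<Rightarrow> 'a" and K :: nat and V :: "'a set"
  assumes K: "K \<ge> 1" and V: "V = P ` {..<K} \<union> Q ` {..<K}"
    and injP: "inj_on P {..<K}" and injQ: "inj_on Q {..<K}" and disj: "P ` {..<K} \<inter> Q ` {..<K} = {}"
    and E: "\<And>u v. u \<in> V \<Longrightarrow> v \<in> V \<Longrightarrow> E u v \<longleftrightarrow> (\<exists>e<K. (u = P e \<and> v = Q e) \<or> (u = Q e \<and> v = P e))"
  shows "geom_realization (indep_complex V E) homeomorphic_space nsphere (K - 1)"
proof -
  let ?X = "geom_realization (indep_complex V E)"
  let ?Y = "nsphere (K - 1)"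
  have fin: "finite V" using V by auto
  have atm: "{..K - Suc 0} = {..<K}" using K by auto
  have atm2: "(i > K - Suc 0) = (i \<ge> K)" for i using K by auto
  have topY: "topspace ?Y = {y. (\<Sum>i<K. y i ^ 2) = 1 \<and> (\<forall>i\<ge>K. y i = 0)}"
    using K by (auto simp: nsphere atm atm2)
  define L where "L x e = x (P e) - x (Q e)" for x :: "'a \<Rightarrow> real" and e
  define S2 where "S2 x = sqrt (\<Sum>e<K. (L x e)\<^sup>2)" for x
  define f where "f x = (\<lambda>e. if e < K then L x e / S2 x else 0)" for x
  define S1 where "S1 y = (\<Sum>e<K. \<bar>y e\<bar>)" for y :: "nat \<Rightarrow> real"
  define g where "g y = (\<lambda>v. (\<Sum>e<K. (if v = P e then 1 else 0) * max (y e) 0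
          + (if v = Q e then 1 else 0) * max (- y e) 0) / S1 y)" for y
  have PQ: "P e \<noteq> Q e'" if "e < K" "e' < K" for e e' using disj that by auto
  have PP: "P e = P e' \<longleftrightarrow> e = e'" if "e < K" "e' < K" for e e' using injP that by (auto dest: inj_onD)
  have QQ: "Q e = Q e' \<longleftrightarrow> e = e'" if "e < K" "e' < K" for e e' using injQ that by (auto dest: inj_onD)
  have sumV: "sum h V = (\<Sum>e<K. h (P e)) + (\<Sum>e<K. h (Q e))" for h :: "'a \<Rightarrow> real"
  proof -
    have "sum h V = sum h (P ` {..<K}) + sum h (Q ` {..<K})"
      unfolding V by (rule sum.union_disjoint) (use disj in auto)
    also have "\<dots> = (\<Sum>e<K. h (P e)) + (\<Sum>e<K. h (Q e))"
      by (simp add: sum.reindex injP injQ)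
    finally show ?thesis .
  qed
  have xfacts: "(\<forall>e<K. x (P e) = 0 \<or> x (Q e) = 0) \<and> (\<Sum>e<K. \<bar>L x e\<bar>) = 1 \<and> S2 x > 0
      \<and> (\<forall>v. 0 \<le> x v) \<and> (\<forall>v. v \<notin> V \<longrightarrow> x v = 0)"
    if x: "x \<in> topspace ?X" for x
  proof -
    note xx = from_geom[OF fin x]
    have z: "\<forall>e<K. x (P e) = 0 \<or> x (Q e) = 0"
    proof (intro allI impI)
      fix e assume e: "e < K"
      have "P e \<in> V" "Q e \<in> V" using e V by auto
      then have "E (P e) (Q e)" using E e by blast
      then show "x (P e) = 0 \<or> x (Q e) = 0" using xx(3) by blast
    qed
    have "(\<Sum>e<K. \<bar>L x e\<bar>) = (\<Sum>e<K. x (P e) + x (Q e))"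
      by (rule sum.cong) (use z xx(1) in \<open>auto simp: L_def\<close>)
    also have "\<dots> = sum x V" by (simp add: sumV sum.distrib)
    finally have s1: "(\<Sum>e<K. \<bar>L x e\<bar>) = 1" using xx(4) by simp
    have "\<exists>e<K. L x e \<noteq> 0"
    proof (rule ccontr)
      assume "\<not> (\<exists>e<K. L x e \<noteq> 0)"
      then have "(\<Sum>e<K. \<bar>L x e\<bar>) = 0" by simp
      then show False using s1 by simp
    qed
    then obtain e where e: "e < K" "L x e \<noteq> 0" by blast
    have "(L x e)\<^sup>2 \<le> (\<Sum>e<K. (L x e)\<^sup>2)"
      by (rule member_le_sum) (use e in auto)
    moreover have "(L x e)\<^sup>2 > 0" using e by simp
    ultimately have "(\<Sum>e<K. (L x e)\<^sup>2) > 0" by linarith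
    then have "S2 x > 0" unfolding S2_def by simp
    then show ?thesis using z s1 xx(1,2) by auto
  qed
  have yfacts: "S1 y > 0" if y: "y \<in> topspace ?Y" for y
  proof -
    have "(\<Sum>i<K. y i ^ 2) = 1" using y topY by auto
    have "\<exists>e<K. y e \<noteq> 0"
    proof (rule ccontr)
      assume "\<not> (\<exists>e<K. y e \<noteq> 0)"
      then have "(\<Sum>i<K. y i ^ 2) = 0" by simp
      then show False using \<open>(\<Sum>i<K. y i ^ 2) = 1\<close> by simp
    qed
    then obtain e where e: "e < K" "y e \<noteq> 0" by blast
    have "\<bar>y e\<bar> \<le> S1 y" unfolding S1_def by (rule member_le_sum) (use e in auto)
    then show ?thesis using e by simp
  qed
  have gP: "g y (P e) = max (y e) 0 / S1 y" if "e < K" for y e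
  proof -
    have "(\<Sum>e'<K. (if P e = P e' then 1 else 0) * max (y e') 0
          + (if P e = Q e' then 1 else 0) * max (- y e') 0) = (\<Sum>e'<K. if e' = e then max (y e') 0 else 0)"
    proof (rule sum.cong)
      fix e' assume "e' \<in> {..<K}"
      then have h1: "(P e = P e') = (e' = e)" and h2: "P e \<noteq> Q e'" using PP[of e e'] PQ[of e e'] that by auto
      show "(if P e = P e' then 1 else 0) * max (y e') 0 + (if P e = Q e' then 1 else 0) * max (- y e') 0
          = (if e' = e then max (y e') 0 else 0)" by (simp only: h1 h2 if_False) simp
    qed simp
    then show ?thesis using that by (simp add: g_def)
  qed
  have gQ: "g y (Q e) = max (- y e) 0 / S1 y" if "e < K" for y e
  proof -
    have "(\<Sum>e'<K. (if Q e = P e' then 1 else 0) * max (y e') 0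
          + (if Q e = Q e' then 1 else 0) * max (- y e') 0) = (\<Sum>e'<K. if e' = e then max (- y e') 0 else 0)"
    proof (rule sum.cong)
      fix e' assume "e' \<in> {..<K}"
      then have h1: "(Q e = Q e') = (e' = e)" and h2: "Q e \<noteq> P e'" using QQ[of e e'] PQ[of e' e] that by auto
      show "(if Q e = P e' then 1 else 0) * max (y e') 0 + (if Q e = Q e' then 1 else 0) * max (- y e') 0
          = (if e' = e then max (- y e') 0 else 0)" by (simp only: h1 h2 if_False) simp
    qed simp
    then show ?thesis using that by (simp add: g_def)
  qed
  have gout: "g y v = 0" if "v \<notin> V" for y v
    using that V by (auto simp: g_def intro!: sum.neutral)
  have fX: "f x \<in> topspace ?Y" if x: "x \<in> topspace ?X" for x
  proof -
    have pos: "S2 x > 0" using xfacts[OF x] by blast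
    have "(\<Sum>i<K. (f x i)\<^sup>2) = (\<Sum>i<K. (L x i)\<^sup>2) / (S2 x)\<^sup>2"
      by (simp add: f_def power_divide sum_divide_distrib)
    also have "\<dots> = 1" using pos unfolding S2_def
      by (simp add: sum_nonneg)
    finally show ?thesis using topY by (simp add: f_def)
  qed
  have gY: "g y \<in> topspace ?X" if y: "y \<in> topspace ?Y" for y
  proof -
    have pos: "S1 y > 0" using yfacts[OF y] .
    let ?T = "P ` {e. e < K \<and> y e > 0} \<union> Q ` {e. e < K \<and> y e < 0}"
    show ?thesis
    proof (rule in_geom[OF fin, of _ ?T])
      show "0 \<le> g y v" for v using pos by (auto simp: g_def intro!: sum_nonneg divide_nonneg_pos)
      show "v \<in> ?T" if "g y v \<noteq> 0" for v
      proof -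
        have "v \<in> V" using that gout by blast
        then consider e where "e < K" "v = P e" | e where "e < K" "v = Q e" using V by auto
        then show ?thesis
        proof cases
          case 1 then show ?thesis using that gP[of e y] by (cases "y e > 0") auto
        next
          case 2 then show ?thesis using that gQ[of e y] by (cases "y e < 0") auto
        qed
      qed
      show "?T \<subseteq> V" using V by auto
      show "\<forall>u\<in>?T. \<forall>v\<in>?T. \<not> E u v"
      proof (intro ballI notI)
        fix u v assume u: "u \<in> ?T" and v: "v \<in> ?T" and "E u v"
        have uV: "u \<in> V" and vV: "v \<in> V" using u v V by auto
        have "\<exists>e<K. (u = P e \<and> v = Q e) \<or> (u = Q e \<and> v = P e)"
          using E[OF uV vV] \<open>E u v\<close> by simp
        then obtain e where e: "e < K" "(u = P e \<and> v = Q e) \<or> (u = Q e \<and> v = P e)"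
          by blast
        show False
          by (rule indep_aux[OF _ injP injQ u v e]) (use PQ in blast)
      qed
      have "sum (g y) V = (\<Sum>e<K. g y (P e)) + (\<Sum>e<K. g y (Q e))"
        by (rule sumV)
      also have "\<dots> = (\<Sum>e<K. max (y e) 0 / S1 y) + (\<Sum>e<K. max (- y e) 0 / S1 y)"
        using gP gQ by (intro arg_cong2[where f="(+)"] sum.cong) auto
      also have "\<dots> = (\<Sum>e<K. max (y e) 0 / S1 y + max (- y e) 0 / S1 y)"
        by (simp add: sum.distrib)
      also have "\<dots> = (\<Sum>e<K. \<bar>y e\<bar> / S1 y)"
        by (simp only: max_add_aux)
      also have "\<dots> = (\<Sum>e<K. \<bar>y e\<bar>) / S1 y"
        by (simp add: sum_divide_distrib)
      also have "\<dots> = 1" using pos by (simp add: S1_def)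
      finally show "sum (g y) V = 1" .
    qed
  qed
  have gf: "g (f x) = x" if x: "x \<in> topspace ?X" for x
  proof
    fix v
    note xf = xfacts[OF x]
    have pos: "S2 x > 0" using xf by blast
    have S1f: "S1 (f x) = 1 / S2 x"
    proof -
      have "S1 (f x) = (\<Sum>e<K. \<bar>L x e\<bar> / S2 x)" unfolding S1_def
        by (rule sum.cong) (use pos in \<open>auto simp: f_def\<close>)
      also have "\<dots> = 1 / S2 x" using xf by (simp add: sum_divide_distrib[symmetric])
      finally show ?thesis .
    qed
    show "g (f x) v = x v"
    proof (cases "v \<in> V")
      case False then show ?thesis using gout xf by auto
    next
      case True
      then consider e where "e < K" "v = P e" | e where "e < K" "v = Q e" using V by auto
      then show ?thesis
      proof cases
        case 1
        have "max (L x e / S2 x) 0 / (1 / S2 x) = max (L x e) 0"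
          by (rule max_div_aux[OF pos])
        also have "\<dots> = x (P e)"
        proof -
          have z: "x (P e) = 0 \<or> x (Q e) = 0" using xf 1 by blast
          have "x (P e) \<ge> 0" "x (Q e) \<ge> 0" using xf by blast+
          then show ?thesis using z unfolding L_def by (rule maxL1)
        qed
        finally have eq: "max ((L x e / S2 x)) 0 / (1 / S2 x) = x (P e)" .
        have "f x e = L x e / S2 x" using 1 by (simp add: f_def)
        moreover have "g (f x) (P e) = max (f x e) 0 / S1 (f x)" using 1(1) by (rule gP)
        ultimately show ?thesis using 1 eq by (simp only: S1f)
      next
        case 2
        have "max (- (L x e / S2 x)) 0 / (1 / S2 x) = max (- L x e) 0"
          by (rule max_div_aux2[OF pos])
        also have "\<dots> = x (Q e)"
        proof -
          have z: "x (P e) = 0 \<or> x (Q e) = 0" using xf 2 by blast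
          have "x (P e) \<ge> 0" "x (Q e) \<ge> 0" using xf by blast+
          then show ?thesis using z unfolding L_def by (rule maxL2)
        qed
        finally have eq: "max (- (L x e / S2 x)) 0 / (1 / S2 x) = x (Q e)" .
        have "f x e = L x e / S2 x" using 2 by (simp add: f_def)
        moreover have "g (f x) (Q e) = max (- f x e) 0 / S1 (f x)" using 2(1) by (rule gQ)
        ultimately show ?thesis using 2 eq by (simp only: S1f)
      qed
    qed
  qed
  have fg: "f (g y) = y" if y: "y \<in> topspace ?Y" for y
  proof
    fix e
    have pos: "S1 y > 0" using yfacts[OF y] .
    have Lg: "L (g y) e' = y e' / S1 y" if "e' < K" for e'
      using that by (simp add: L_def gP gQ max_diff_aux)
    have "(\<Sum>e<K. (L (g y) e)\<^sup>2) = (\<Sum>e<K. (y e)\<^sup>2) / (S1 y)\<^sup>2"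
      by (simp add: Lg power_divide sum_divide_distrib)
    also have "\<dots> = 1 / (S1 y)\<^sup>2" using y topY by simp
    finally have "S2 (g y) = 1 / S1 y" using pos by (simp add: S2_def real_sqrt_divide)
    then show "f (g y) e = y e"
      using pos y topY by (auto simp: f_def Lg)
  qed
  have cf: "continuous_map ?X ?Y f"
    unfolding nsphere continuous_map_in_subtopology
  proof
    show "continuous_map ?X (powertop_real UNIV) f"
      unfolding continuous_map_componentwise_UNIV
    proof
      fix e
      show "continuous_map ?X euclideanreal (\<lambda>x. f x e)"
      proof (cases "e < K")
        case True
        have "continuous_map ?X euclideanreal (\<lambda>x. L x e / S2 x)"
          unfolding L_def S2_def
        proof (intro continuous_map_real_divide continuous_map_diff continuous_map_sqrt continuous_map_sum
            continuous_map_real_pow coord_cont finite_lessThan)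
          fix x assume "x \<in> topspace ?X"
          then have "S2 x > 0" using xfacts by blast
          then show "sqrt (\<Sum>e<K. (x (P e) - x (Q e))\<^sup>2) \<noteq> 0" unfolding S2_def L_def by simp
        qed
        then show ?thesis using True by (simp add: f_def)
      qed (simp add: f_def)
    qed
    show "f \<in> topspace ?X \<rightarrow> {x. (\<Sum>i\<le>K - 1. (x i)\<^sup>2) = 1 \<and> (\<forall>i>K - 1. x i = 0)}"
      using fX topY by (auto simp: nsphere atm atm2)
  qed
  have cg: "continuous_map ?Y ?X g"
  proof (rule cont_into_geom)
    fix v
    show "continuous_map ?Y euclideanreal (\<lambda>y. g y v)"
      unfolding g_def S1_def
    proof (intro continuous_map_real_divide continuous_map_add continuous_map_real_mult continuous_map_sum
        continuous_map_real_max continuous_map_minus continuous_map_real_abs continuous_map_nsphere_projection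
        continuous_map_const[THEN iffD2] disjI2 finite_lessThan)
      fix y assume "y \<in> topspace ?Y"
      then have "S1 y > 0" using yfacts by blast
      then show "(\<Sum>e<K. \<bar>y e\<bar>) \<noteq> 0" unfolding S1_def by simp
    qed (auto simp: topspace_geom)
  qed (use gY in auto)
  show ?thesis unfolding homeomorphic_space_def homeomorphic_maps_def
    using cf cg gf fg by blast
qed

fun side :: "vtx \<Rightarrow> nat" where
  "side (A i) = 0" | "side (B i j) = 1" | "side (C i j) = 2"

fun aidx :: "vtx \<Rightarrow> nat" where
  "aidx (A i) = i" | "aidx (B i j) = 0" | "aidx (C i j) = 0"

fun pos :: "nat \<Rightarrow> vtx \<Rightarrow> nat" where
  "pos m (A i) = 0" | "pos m (B i j) = (i - 1) * (3 * m) + j" | "pos m (C i j) = (i - 1) * (3 * m) + j"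

definition H :: "nat \<Rightarrow> vtx \<Rightarrow> vtx \<Rightarrow> bool" where
  "H m u v \<longleftrightarrow> (side u \<noteq> 0 \<and> side v = side u \<and> (pos m u = pos m v + 1 \<or> pos m v = pos m u + 1))
   \<or> (side u = 0 \<and> side v \<noteq> 0 \<and> (pos m v = 3 * (m * aidx u) \<or> pos m v = 3 * (m * aidx u) + 1))
   \<or> (side v = 0 \<and> side u \<noteq> 0 \<and> (pos m u = 3 * (m * aidx v) \<or> pos m u = 3 * (m * aidx v) + 1))"

definition mk :: "nat \<Rightarrow> nat \<Rightarrow> nat \<Rightarrow> vtx" where
  "mk m s p = (if s = 1 then B ((p - 1) div (3 * m) + 1) ((p - 1) mod (3 * m) + 1)
                else C ((p - 1) div (3 * m) + 1) ((p - 1) mod (3 * m) + 1))"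

definition V0 :: "nat \<Rightarrow> nat \<Rightarrow> vtx set" where
  "V0 m t = {v \<in> Gverts (3 * m + 1) t. v \<noteq> A t \<and> \<not> (side v \<noteq> 0 \<and> pos m v = 3 * (t * m))}"

lemma H_sym: "H m u v \<longleftrightarrow> H m v u"
  unfolding H_def by auto

lemma Gverts_iff:
  "A i \<in> Gverts n t \<longleftrightarrow> i \<le> t"
  "B i j \<in> Gverts n t \<longleftrightarrow> 1 \<le> i \<and> i \<le> t \<and> 1 \<le> j \<and> j \<le> n - 1"
  "C i j \<in> Gverts n t \<longleftrightarrow> 1 \<le> i \<and> i \<le> t \<and> 1 \<le> j \<and> j \<le> n - 1"
  by (auto simp: Gverts_def)

lemma finite_Gverts: "finite (Gverts n t)"
proof -
  have "Gverts n t \<subseteq> A ` {..t} \<union> (\<lambda>(i, j). B i j) ` ({..t} \<times> {..n}) \<union> (\<lambda>(i, j). C i j) ` ({..t} \<times> {..n})"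
    by (auto simp: Gverts_def)
  then show ?thesis by (rule finite_subset) auto
qed

lemma divmod_unique:
  fixes a b c d M :: nat
  assumes "b < M" "d < M" "a * M + b = c * M + d"
  shows "a = c \<and> b = d"
proof -
  have "(a * M + b) div M = a" "(a * M + b) mod M = b" using assms(1) by auto
  moreover have "(c * M + d) div M = c" "(c * M + d) mod M = d" using assms(2) by auto
  ultimately show ?thesis using assms(3) by (metis (no_types))
qed

lemma BB_arith:
  fixes M i k j l :: nat
  assumes "1 \<le> i" "1 \<le> k" "1 \<le> j" "j \<le> M" "1 \<le> l" "l \<le> M"
  shows "(k - 1) * M + l = (i - 1) * M + j + 1 \<longleftrightarrow> (k = i \<and> l = j + 1) \<or> (k = i + 1 \<and> j = M \<and> l = 1)"
proof -
  obtain i0 k0 j0 l0 where s: "i = Suc i0" "k = Suc k0" "j = Suc j0" "l = Suc l0"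
    using assms by (metis Suc_le_D One_nat_def)
  have j0: "j0 < M" "l0 < M" using assms s by auto
  show ?thesis
  proof
    assume h: "(k - 1) * M + l = (i - 1) * M + j + 1"
    then have h': "k0 * M + l0 = i0 * M + Suc j0" using s by simp
    show "(k = i \<and> l = j + 1) \<or> (k = i + 1 \<and> j = M \<and> l = 1)"
    proof (cases "Suc j0 < M")
      case True
      then show ?thesis using divmod_unique[OF j0(2) True h'] s by simp
    next
      case False
      then have "Suc j0 = M" using j0 by simp
      then have "k0 * M + l0 = Suc i0 * M + 0" using h' by simp
      then show ?thesis using divmod_unique[of l0 M 0 k0 "Suc i0"] j0 s \<open>Suc j0 = M\<close> by simp
    qed
  next
    assume "(k = i \<and> l = j + 1) \<or> (k = i + 1 \<and> j = M \<and> l = 1)"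
    then show "(k - 1) * M + l = (i - 1) * M + j + 1" using s by auto
  qed
qed

lemma AB_arith:
  fixes M i k l :: nat
  assumes "1 \<le> k" "1 \<le> l" "l \<le> M"
  shows "(k - 1) * M + l = M * i \<longleftrightarrow> (l = M \<and> k = i)"
    and "(k - 1) * M + l = M * i + 1 \<longleftrightarrow> (l = 1 \<and> k = i + 1)"
proof -
  obtain k0 l0 where s: "k = Suc k0" "l = Suc l0"
    using assms by (metis Suc_le_D One_nat_def)
  have l0: "l0 < M" using assms s by auto
  show "(k - 1) * M + l = M * i \<longleftrightarrow> (l = M \<and> k = i)"
  proof
    assume h: "(k - 1) * M + l = M * i"
    then have "i \<noteq> 0" using s by (cases i) auto
    then obtain i0 where i0: "i = Suc i0" by (cases i) auto
    have "k0 * M + l0 + 1 = i0 * M + M" using h s i0 by (simp add: algebra_simps)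
    then have "k0 * M + l0 = i0 * M + (M - 1)" using l0 by simp
    then show "l = M \<and> k = i" using divmod_unique[of l0 M "M - 1" k0 i0] l0 s i0 by simp
  next
    assume "l = M \<and> k = i"
    then show "(k - 1) * M + l = M * i" using s by (simp add: algebra_simps)
  qed
  show "(k - 1) * M + l = M * i + 1 \<longleftrightarrow> (l = 1 \<and> k = i + 1)"
  proof
    assume h: "(k - 1) * M + l = M * i + 1"
    then have "k0 * M + l0 = i * M + 0" using s by (simp add: algebra_simps)
    then show "l = 1 \<and> k = i + 1" using divmod_unique[of l0 M 0 k0 i] l0 s by simp
  next
    assume "l = 1 \<and> k = i + 1"
    then show "(k - 1) * M + l = M * i + 1" using s by (simp add: algebra_simps)
  qed
qed


lemma Gedge0_simps:
  "Gedge0 n t (A i) (A k) = False"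
  "Gedge0 n t (B i j) (A k) = False"
  "Gedge0 n t (C i j) (A k) = False"
  "Gedge0 n t (B i j) (C k l) = False"
  "Gedge0 n t (C i j) (B k l) = False"
  "Gedge0 n t (A i) (B k l) \<longleftrightarrow> 1 \<le> k \<and> k \<le> t \<and> ((i = k - 1 \<and> l = 1) \<or> (i = k \<and> l = n - 1))"
  "Gedge0 n t (A i) (C k l) \<longleftrightarrow> 1 \<le> k \<and> k \<le> t \<and> ((i = k - 1 \<and> l = 1) \<or> (i = k \<and> l = n - 1))"
  "Gedge0 n t (B i j) (B k l) \<longleftrightarrow> (1 \<le> i \<and> i \<le> t \<and> 1 \<le> j \<and> j \<le> n - 2 \<and> k = i \<and> l = j + 1)
      \<or> (1 \<le> i \<and> i \<le> t - 1 \<and> j = n - 1 \<and> k = i + 1 \<and> l = 1)"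
  "Gedge0 n t (C i j) (C k l) \<longleftrightarrow> (1 \<le> i \<and> i \<le> t \<and> 1 \<le> j \<and> j \<le> n - 2 \<and> k = i \<and> l = j + 1)
      \<or> (1 \<le> i \<and> i \<le> t - 1 \<and> j = n - 1 \<and> k = i + 1 \<and> l = 1)"
  by (auto simp: Gedge0_def)

lemma BB_edge:
  fixes m t i j k l :: nat
  assumes m: "m \<ge> 1" and r: "1 \<le> i" "i \<le> t" "1 \<le> j" "j \<le> 3 * m" "1 \<le> k" "k \<le> t" "1 \<le> l" "l \<le> 3 * m"
  shows "((1 \<le> i \<and> i \<le> t \<and> 1 \<le> j \<and> j \<le> 3 * m + 1 - 2 \<and> k = i \<and> l = j + 1)
      \<or> (1 \<le> i \<and> i \<le> t - 1 \<and> j = 3 * m + 1 - 1 \<and> k = i + 1 \<and> l = 1))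
     \<longleftrightarrow> (k - 1) * (3 * m) + l = (i - 1) * (3 * m) + j + 1"
  using BB_arith[of i k j "3 * m" l] r by auto

lemma AB_edge:
  fixes m t i k l :: nat
  assumes m: "m \<ge> 1" and r: "1 \<le> k" "k \<le> t" "1 \<le> l" "l \<le> 3 * m"
  shows "(1 \<le> k \<and> k \<le> t \<and> ((i = k - 1 \<and> l = 1) \<or> (i = k \<and> l = 3 * m + 1 - 1)))
     \<longleftrightarrow> ((k - 1) * (3 * m) + l = 3 * (m * i) \<or> (k - 1) * (3 * m) + l = 3 * (m * i) + 1)"
  using AB_arith[of k l "3 * m" i] r by (auto simp: mult.assoc)

lemma adj_H:
  assumes m: "m \<ge> 1" and u: "u \<in> Gverts (3 * m + 1) t" and v: "v \<in> Gverts (3 * m + 1) t"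
  shows "Gadj (3 * m + 1) t u v \<longleftrightarrow> H m u v"
proof (cases u)
  case (A i)
  then show ?thesis
  proof (cases v)
    case (A k) then show ?thesis using \<open>u = A i\<close> by (simp add: Gadj_def Gedge0_simps H_def)
  next
    case (B k l)
    then show ?thesis using \<open>u = A i\<close> v AB_edge[OF m, where t=t and k=k and l=l and i=i]
      by (simp add: Gadj_def Gedge0_simps H_def Gverts_iff)
  next
    case (C k l)
    then show ?thesis using \<open>u = A i\<close> v AB_edge[OF m, where t=t and k=k and l=l and i=i]
      by (simp add: Gadj_def Gedge0_simps H_def Gverts_iff)
  qed
next
  case (B i j)
  then show ?thesis
  proof (cases v)
    case (A k) then show ?thesis using \<open>u = B i j\<close> u AB_edge[OF m, where t=t and k=i and l=j and i=k]
      by (simp add: Gadj_def Gedge0_simps H_def Gverts_iff)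
  next
    case (B k l)
    then show ?thesis using \<open>u = B i j\<close> u v BB_edge[OF m, where t=t and i=i and j=j and k=k and l=l] BB_edge[OF m, where t=t and i=k and j=l and k=i and l=j]
      by (simp add: Gadj_def Gedge0_simps H_def Gverts_iff) blast
  next
    case (C k l)
    then show ?thesis using \<open>u = B i j\<close> by (simp add: Gadj_def Gedge0_simps H_def)
  qed
next
  case (C i j)
  then show ?thesis
  proof (cases v)
    case (A k) then show ?thesis using \<open>u = C i j\<close> u AB_edge[OF m, where t=t and k=i and l=j and i=k]
      by (simp add: Gadj_def Gedge0_simps H_def Gverts_iff)
  next
    case (C k l)
    then show ?thesis using \<open>u = C i j\<close> u v BB_edge[OF m, where t=t and i=i and j=j and k=k and l=l] BB_edge[OF m, where t=t and i=k and j=l and k=i and l=j]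
      by (simp add: Gadj_def Gedge0_simps H_def Gverts_iff) blast
  next
    case (B k l)
    then show ?thesis using \<open>u = C i j\<close> by (simp add: Gadj_def Gedge0_simps H_def)
  qed
qed


lemma pos_bound:
  assumes u: "u \<in> Gverts (3 * m + 1) t" and s: "side u \<noteq> 0"
  shows "1 \<le> pos m u \<and> pos m u \<le> 3 * (t * m)"
proof -
  have key: "(i - 1) * (3 * m) + j \<le> 3 * (t * m)" if "1 \<le> i" "i \<le> t" "j \<le> 3 * m" for i j :: nat
  proof -
    have "(i - 1) * (3 * m) \<le> (t - 1) * (3 * m)" using that by (intro mult_le_mono1) simp
    moreover have "(t - 1) * (3 * m) + 3 * m = 3 * (t * m)" using that
      by (cases t) (auto simp: algebra_simps)
    ultimately show ?thesis using that by linarith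
  qed
  show ?thesis using u s key by (cases u) (auto simp: Gverts_iff)
qed

lemma key_divmod: fixes i j m :: nat
  assumes "1 \<le> i" "1 \<le> j" "j \<le> 3 * m"
  shows "(((i - 1) * (3 * m) + j - 1) div (3 * m) + 1) = i \<and> (((i - 1) * (3 * m) + j - 1) mod (3 * m) + 1) = j"
proof -
  obtain i0 j0 where ij: "i = Suc i0" "j = Suc j0" using assms by (metis Suc_le_D One_nat_def)
  have j0: "j0 < 3 * m" using assms ij by simp
  have e: "(i - 1) * (3 * m) + j - 1 = j0 + i0 * (3 * m)" using ij by simp
  have "(j0 + i0 * (3 * m)) div (3 * m) = i0" using j0 by simp
  moreover have "(j0 + i0 * (3 * m)) mod (3 * m) = j0" using j0 by simp
  ultimately show ?thesis using e ij by (simp add: add.commute)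
qed

lemma mk_repr:
  assumes m: "m \<ge> 1" and u: "u \<in> Gverts (3 * m + 1) t" and s: "side u \<noteq> 0"
  shows "u = mk m (side u) (pos m u)"
proof -
  show ?thesis
  proof (cases u)
    case (A i) then show ?thesis using s by simp
  next
    case (B i j)
    then have r: "1 \<le> i" "1 \<le> j" "j \<le> 3 * m" using u by (auto simp: Gverts_iff)
    have "mk m (side u) (pos m u) = B (((i - 1) * (3 * m) + j - 1) div (3 * m) + 1) (((i - 1) * (3 * m) + j - 1) mod (3 * m) + 1)"
      using B by (simp add: mk_def)
    then show ?thesis using key_divmod[OF r] B by simp
  next
    case (C i j)
    then have r: "1 \<le> i" "1 \<le> j" "j \<le> 3 * m" using u by (auto simp: Gverts_iff)
    have "mk m (side u) (pos m u) = C (((i - 1) * (3 * m) + j - 1) div (3 * m) + 1) (((i - 1) * (3 * m) + j - 1) mod (3 * m) + 1)"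
      using C by (simp add: mk_def)
    then show ?thesis using key_divmod[OF r] C by simp
  qed
qed

lemma mk_facts:
  assumes m: "m \<ge> 1" and p: "1 \<le> p" "p < 3 * (t * m)" and s: "s = 1 \<or> s = 2"
  shows "mk m s p \<in> V0 m t" "side (mk m s p) = s" "pos m (mk m s p) = p" "aidx (mk m s p) = 0"
proof -
  have M: "3 * m > 0" using m by simp
  have d: "(p - 1) div (3 * m) < t"
    using p M by (simp add: div_less_iff_less_mult mult.commute mult.left_commute)
  have md: "(p - 1) mod (3 * m) < 3 * m" using M by simp
  have ps: "(p - 1) div (3 * m) * (3 * m) + (p - 1) mod (3 * m) + 1 = p"
    using p div_mult_mod_eq[of "p - 1" "3 * m"] by linarith
  show "side (mk m s p) = s" using s by (auto simp: mk_def)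
  show pp: "pos m (mk m s p) = p" using ps by (auto simp: mk_def)
  show "aidx (mk m s p) = 0" by (simp add: mk_def)
  have "mk m s p \<in> Gverts (3 * m + 1) t" using d md by (auto simp: mk_def Gverts_iff)
  then show "mk m s p \<in> V0 m t" using pp p s by (auto simp: V0_def mk_def)
qed

lemma V0_eq:
  assumes m: "m \<ge> 1"
  shows "Gverts (3 * m + 1) t - closed_nbhd (Gverts (3 * m + 1) t) (Gadj (3 * m + 1) t) (A t) = V0 m t"
proof -
  have At: "A t \<in> Gverts (3 * m + 1) t" by (simp add: Gverts_iff)
  have this_lemma: "u \<notin> closed_nbhd (Gverts (3 * m + 1) t) (Gadj (3 * m + 1) t) (A t) \<longleftrightarrow>
        u \<noteq> A t \<and> \<not> (side u \<noteq> 0 \<and> pos m u = 3 * (t * m))"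
    if u: "u \<in> Gverts (3 * m + 1) t" for u
  proof -
    have "Gadj (3 * m + 1) t (A t) u \<longleftrightarrow> H m (A t) u" by (rule adj_H[OF m At u])
    also have "\<dots> \<longleftrightarrow> side u \<noteq> 0 \<and> pos m u = 3 * (t * m)"
      using pos_bound[OF u] by (auto simp: H_def mult.commute)
    finally have eq: "Gadj (3 * m + 1) t (A t) u \<longleftrightarrow> side u \<noteq> 0 \<and> pos m u = 3 * (t * m)" .
    show ?thesis using u eq by (auto simp: closed_nbhd_def)
  qed
  show ?thesis
  proof (rule set_eqI)
    fix u
    show "u \<in> Gverts (3 * m + 1) t - closed_nbhd (Gverts (3 * m + 1) t) (Gadj (3 * m + 1) t) (A t) \<longleftrightarrow> u \<in> V0 m t"
    proof (cases "u \<in> Gverts (3 * m + 1) t")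
      case True
      then show ?thesis using this_lemma[OF True] by (simp add: V0_def)
    next
      case False
      then show ?thesis by (simp add: V0_def)
    qed
  qed
qed

lemma V0_facts:
  assumes m: "m \<ge> 1" and v: "v \<in> V0 m t"
  shows "side v = 0 \<Longrightarrow> v = A (aidx v) \<and> aidx v < t"
    and "side v \<noteq> 0 \<Longrightarrow> 1 \<le> pos m v \<and> pos m v < 3 * (t * m) \<and> v = mk m (side v) (pos m v)
           \<and> (side v = 1 \<or> side v = 2) \<and> aidx v = 0"
proof -
  have vG: "v \<in> Gverts (3 * m + 1) t" and nA: "v \<noteq> A t"
    and np: "\<not> (side v \<noteq> 0 \<and> pos m v = 3 * (t * m))" using v by (auto simp: V0_def)
  show "side v = 0 \<Longrightarrow> v = A (aidx v) \<and> aidx v < t"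
    using vG nA by (cases v) (auto simp: Gverts_iff)
  assume s: "side v \<noteq> 0"
  show "1 \<le> pos m v \<and> pos m v < 3 * (t * m) \<and> v = mk m (side v) (pos m v)
           \<and> (side v = 1 \<or> side v = 2) \<and> aidx v = 0"
  proof (intro conjI)
    show "1 \<le> pos m v" "pos m v < 3 * (t * m)" using pos_bound[OF vG s] np s by auto
    show "v = mk m (side v) (pos m v)" by (rule mk_repr[OF m vG s])
    show "side v = 1 \<or> side v = 2" using s by (cases v) auto
    show "aidx v = 0" using s by (cases v) auto
  qed
qed

lemma V0_A: "A i \<in> V0 m t \<longleftrightarrow> i < t"
  by (auto simp: V0_def Gverts_iff)

lemma finite_V0: "finite (V0 m t)"
  using finite_Gverts by (auto simp: V0_def)

lemma indep_cong:
  assumes "\<And>u v. u \<in> V \<Longrightarrow> v \<in> V \<Longrightarrow> E u v \<longleftrightarrow> E' u v"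
  shows "indep_complex V E = indep_complex V E'"
  using assms unfolding indep_complex_def by blast


lemma no3: "3 * a + 2 \<noteq> 3 * (b::nat)" "3 * a + 2 \<noteq> 3 * (b::nat) + 1" by presburger+

definition W :: "nat \<Rightarrow> nat \<Rightarrow> nat \<Rightarrow> vtx set" where
  "W m t k = {v \<in> V0 m t. \<not> (side v \<noteq> 0 \<and> pos m v mod 3 = 0 \<and> 3 * (t * m - k) \<le> pos m v)}"

definition rstep :: "nat \<Rightarrow> nat \<Rightarrow> nat \<Rightarrow> vtx \<Rightarrow> vtx" where
  "rstep m t k v = (if side v \<noteq> 0 \<and> pos m v = 3 * (t * m - k - 1) then mk m (side v) (3 * (t * m - k - 1) + 2) else v)"

lemma W_sub: "W m t k \<subseteq> V0 m t" by (auto simp: W_def)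

lemma step_conds:
  assumes m: "m \<ge> 1" and k: "k + 1 < t * m"
  shows "W m t (Suc k) \<subseteq> W m t k"
    and "\<forall>v\<in>W m t k. rstep m t k v \<in> W m t (Suc k)"
    and "\<forall>v\<in>W m t (Suc k). rstep m t k v = v"
    and "\<forall>x\<in>W m t k. \<forall>y\<in>W m t k. \<not> H m x y \<longrightarrow> \<not> H m x (rstep m t k y) \<and> \<not> H m (rstep m t k x) (rstep m t k y)"
proof -
  define T where "T = t * m"
  define c where "c = 3 * (T - k - 1)"
  have k': "k + 1 < T" using k T_def by simp
  have c3: "3 * (T - k) = c + 3" "3 * (T - Suc k) = c" "c mod 3 = 0" "c + 2 < 3 * T" "1 \<le> c + 2"
    using k' by (auto simp: c_def)
  have r_def': "rstep m t k v = (if side v \<noteq> 0 \<and> pos m v = c then mk m (side v) (c + 2) else v)" for v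
    by (simp add: rstep_def c_def T_def)
  have Wk: "v \<in> W m t k \<longleftrightarrow> v \<in> V0 m t \<and> \<not> (side v \<noteq> 0 \<and> pos m v mod 3 = 0 \<and> c + 3 \<le> pos m v)" for v
    using c3 by (simp add: W_def T_def[symmetric])
  have Wk1: "v \<in> W m t (Suc k) \<longleftrightarrow> v \<in> V0 m t \<and> \<not> (side v \<noteq> 0 \<and> pos m v mod 3 = 0 \<and> c \<le> pos m v)" for v
    using c3 by (simp add: W_def T_def[symmetric])
  have mkc: "mk m s (c + 2) \<in> V0 m t \<and> side (mk m s (c + 2)) = s \<and> pos m (mk m s (c + 2)) = c + 2
      \<and> aidx (mk m s (c + 2)) = 0" if "s = 1 \<or> s = 2" for s
    using mk_facts[OF m c3(5) _ that] c3(4) by (simp add: T_def)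
  show "W m t (Suc k) \<subseteq> W m t k" using Wk Wk1 by auto
  show "\<forall>v\<in>W m t k. rstep m t k v \<in> W m t (Suc k)"
  proof
    fix v assume v: "v \<in> W m t k"
    have vV: "v \<in> V0 m t" using v W_sub by blast
    show "rstep m t k v \<in> W m t (Suc k)"
    proof (cases "side v \<noteq> 0 \<and> pos m v = c")
      case True
      have s: "side v = 1 \<or> side v = 2" using V0_facts(2)[OF m vV] True by blast
      have "(c + 2) mod 3 \<noteq> 0" using c3(3) by presburger
      then show ?thesis using True mkc[OF s] by (simp add: r_def' Wk1)
    next
      case False
      have "\<not> (side v \<noteq> 0 \<and> pos m v mod 3 = 0 \<and> c \<le> pos m v)"
      proof
        assume a: "side v \<noteq> 0 \<and> pos m v mod 3 = 0 \<and> c \<le> pos m v"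
        then have "pos m v < c + 3" using v Wk by auto
        then show False using a False c3(3) by presburger
      qed
      then show ?thesis using False vV by (auto simp: r_def' Wk1)
    qed
  qed
  show "\<forall>v\<in>W m t (Suc k). rstep m t k v = v"
  proof
    fix v assume "v \<in> W m t (Suc k)"
    then have "\<not> (side v \<noteq> 0 \<and> pos m v = c)" using c3(3) Wk1 by auto
    then show "rstep m t k v = v" by (auto simp: r_def')
  qed
  have P1: "\<not> H m x (rstep m t k y)" if x: "x \<in> W m t k" and y: "y \<in> W m t k" and nH: "\<not> H m x y" for x y
  proof (cases "side y \<noteq> 0 \<and> pos m y = c")
    case False
    then show ?thesis using nH by (auto simp: r_def')
  next
    case True
    have yV: "y \<in> V0 m t" using y W_sub by blast
    have s: "side y = 1 \<or> side y = 2" using V0_facts(2)[OF m yV] True by blast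
    have ry: "side (rstep m t k y) = side y" "pos m (rstep m t k y) = c + 2"
      using True mkc[OF s] by (auto simp: r_def')
    show ?thesis
    proof
      assume h: "H m x (rstep m t k y)"
      have "side x \<noteq> 0 \<Longrightarrow> pos m x \<noteq> c + 3" using x c3(3) Wk by auto
      moreover have "3 * (m * aidx x) \<noteq> c + 2" "3 * (m * aidx x) + 1 \<noteq> c + 2"
        using no3[of "T - k - 1" "m * aidx x"] by (auto simp: c_def)
      ultimately have "side x \<noteq> 0 \<and> side x = side y \<and> pos m x = c + 1"
        using h ry True unfolding H_def by auto
      then have "H m x y" using True unfolding H_def by auto
      then show False using nH by simp
    qed
  qed
  show "\<forall>x\<in>W m t k. \<forall>y\<in>W m t k. \<not> H m x y \<longrightarrow> \<not> H m x (rstep m t k y) \<and> \<not> H m (rstep m t k x) (rstep m t k y)"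
  proof (intro ballI impI conjI)
    fix x y assume x: "x \<in> W m t k" and y: "y \<in> W m t k" and nH: "\<not> H m x y"
    show "\<not> H m x (rstep m t k y)" by (rule P1[OF x y nH])
    show "\<not> H m (rstep m t k x) (rstep m t k y)"
    proof (cases "side x \<noteq> 0 \<and> pos m x = c")
      case False
      then show ?thesis using P1[OF x y nH] by (auto simp: r_def')
    next
      case cx: True
      show ?thesis
      proof (cases "side y \<noteq> 0 \<and> pos m y = c")
        case False
        have "\<not> H m y (rstep m t k x)" using P1[OF y x] nH H_sym by blast
        then show ?thesis using False H_sym by (auto simp: r_def')
      next
        case cy: True
        have xV: "x \<in> V0 m t" using x W_sub by blast
        have yV: "y \<in> V0 m t" using y W_sub by blast
        have sx: "side x = 1 \<or> side x = 2" using V0_facts(2)[OF m xV] cx by blast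
        have sy: "side y = 1 \<or> side y = 2" using V0_facts(2)[OF m yV] cy by blast
        show ?thesis using cx cy mkc[OF sx] mkc[OF sy] by (auto simp: r_def' H_def)
      qed
    qed
  qed
qed


definition Wf :: "nat \<Rightarrow> nat \<Rightarrow> vtx set" where
  "Wf m t = {v \<in> V0 m t. side v \<noteq> 0 \<and> pos m v mod 3 \<noteq> 0}"

definition ra :: "nat \<Rightarrow> vtx \<Rightarrow> vtx" where
  "ra m v = (if side v = 0 then mk m 1 (3 * (m * aidx v) + 2) else v)"

lemma W0: assumes m: "m \<ge> 1" shows "W m t 0 = V0 m t"
proof (rule set_eqI)
  fix v
  have "v \<in> V0 m t \<Longrightarrow> side v \<noteq> 0 \<Longrightarrow> pos m v < 3 * (t * m)" using V0_facts(2)[OF m] by blast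
  then show "v \<in> W m t 0 \<longleftrightarrow> v \<in> V0 m t" unfolding W_def by auto
qed

lemma a_conds:
  assumes m: "m \<ge> 1" and t: "t \<ge> 1"
  shows "Wf m t \<subseteq> W m t (t * m - 1)"
    and "\<forall>v\<in>W m t (t * m - 1). ra m v \<in> Wf m t"
    and "\<forall>v\<in>Wf m t. ra m v = v"
    and "\<forall>x\<in>W m t (t * m - 1). \<forall>y\<in>W m t (t * m - 1). \<not> H m x y \<longrightarrow> \<not> H m x (ra m y) \<and> \<not> H m (ra m x) (ra m y)"
proof -
  have tm: "t * m \<ge> 1" using m t by simp
  have Wa: "v \<in> W m t (t * m - 1) \<longleftrightarrow> v \<in> V0 m t \<and> (side v = 0 \<or> pos m v mod 3 \<noteq> 0)" for v
  proof -
    have e3: "3 * (t * m - (t * m - 1)) = 3" using tm by simp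
    have imp: "v \<in> V0 m t \<and> side v \<noteq> 0 \<and> pos m v mod 3 = 0 \<longrightarrow> 3 \<le> pos m v"
    proof
      assume a: "v \<in> V0 m t \<and> side v \<noteq> 0 \<and> pos m v mod 3 = 0"
      have "1 \<le> pos m v" using V0_facts(2)[OF m] a by blast
      moreover have "pos m v mod 3 = 0" using a by blast
      ultimately show "3 \<le> pos m v" by presburger
    qed
    show ?thesis unfolding W_def mem_Collect_eq e3 using imp by auto
  qed
  have raA: "ra m v \<in> V0 m t \<and> side (ra m v) = 1 \<and> pos m (ra m v) = 3 * (m * aidx v) + 2 \<and> aidx (ra m v) = 0"
    if v: "v \<in> V0 m t" "side v = 0" for v
  proof -
    have a: "aidx v < t" using V0_facts(1)[OF m v(1) v(2)] by blast
    have "m * (aidx v + 1) \<le> m * t" using a by (intro mult_le_mono2) simp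
    then have "m * aidx v + m \<le> t * m" by (simp add: algebra_simps)
    then have "3 * (m * aidx v) + 2 < 3 * (t * m)" using m by linarith
    then show ?thesis using mk_facts[OF m _ _, of "3 * (m * aidx v) + 2" t 1] v by (simp add: ra_def)
  qed
  show "Wf m t \<subseteq> W m t (t * m - 1)" using Wa by (auto simp: Wf_def)
  show "\<forall>v\<in>W m t (t * m - 1). ra m v \<in> Wf m t"
  proof
    fix v assume v: "v \<in> W m t (t * m - 1)"
    then have vV: "v \<in> V0 m t" using Wa by blast
    show "ra m v \<in> Wf m t"
    proof (cases "side v = 0")
      case True
      have "(3 * (m * aidx v) + 2) mod 3 \<noteq> 0" by presburger
      then show ?thesis using raA[OF vV True] by (simp add: Wf_def)
    next
      case False
      then show ?thesis using v Wa by (simp add: Wf_def ra_def)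
    qed
  qed
  show "\<forall>v\<in>Wf m t. ra m v = v" by (auto simp: Wf_def ra_def)
  have P1: "\<not> H m x (ra m y)" if x: "x \<in> W m t (t * m - 1)" and y: "y \<in> W m t (t * m - 1)" and nH: "\<not> H m x y" for x y
  proof (cases "side y = 0")
    case False
    then show ?thesis using nH by (simp add: ra_def)
  next
    case True
    have yV: "y \<in> V0 m t" using y Wa by blast
    note ry = raA[OF yV True]
    show ?thesis
    proof
      assume h: "H m x (ra m y)"
      have "side x \<noteq> 0 \<Longrightarrow> pos m x \<noteq> 3 * (m * aidx y) + 3"
        using x Wa by (metis add_0 mod_mult_self4 mod_self)
      moreover have "3 * (m * aidx x) \<noteq> 3 * (m * aidx y) + 2" "3 * (m * aidx x) + 1 \<noteq> 3 * (m * aidx y) + 2"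
        using no3[of "m * aidx y" "m * aidx x"] by auto
      ultimately have "side x \<noteq> 0 \<and> pos m x = 3 * (m * aidx y) + 1"
        using h ry unfolding H_def by auto
      then have "H m x y" using True unfolding H_def by auto
      then show False using nH by simp
    qed
  qed
  show "\<forall>x\<in>W m t (t * m - 1). \<forall>y\<in>W m t (t * m - 1). \<not> H m x y \<longrightarrow> \<not> H m x (ra m y) \<and> \<not> H m (ra m x) (ra m y)"
  proof (intro ballI impI conjI)
    fix x y assume x: "x \<in> W m t (t * m - 1)" and y: "y \<in> W m t (t * m - 1)" and nH: "\<not> H m x y"
    show "\<not> H m x (ra m y)" by (rule P1[OF x y nH])
    show "\<not> H m (ra m x) (ra m y)"
    proof (cases "side x = 0")
      case False
      then show ?thesis using P1[OF x y nH] by (simp add: ra_def)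
    next
      case cx: True
      show ?thesis
      proof (cases "side y = 0")
        case False
        have "\<not> H m y (ra m x)" using P1[OF y x] nH H_sym by blast
        then show ?thesis using False H_sym by (simp add: ra_def)
      next
        case cy: True
        have xV: "x \<in> V0 m t" using x Wa by blast
        have yV: "y \<in> V0 m t" using y Wa by blast
        note rx = raA[OF xV cx] and ry = raA[OF yV cy]
        have "pos m (ra m x) mod 3 = 2" "pos m (ra m y) mod 3 = 2" using rx ry by presburger+
        then have "pos m (ra m x) \<noteq> pos m (ra m y) + 1" "pos m (ra m y) \<noteq> pos m (ra m x) + 1" by presburger+
        then show ?thesis using rx ry by (simp add: H_def)
      qed
    qed
  qed
qed

definition sd :: "nat \<Rightarrow> nat \<Rightarrow> nat" where "sd T e = (if e < T then 1 else 2)"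
definition ix :: "nat \<Rightarrow> nat \<Rightarrow> nat" where "ix T e = (if e < T then e else e - T)"
definition Pm :: "nat \<Rightarrow> nat \<Rightarrow> nat \<Rightarrow> vtx" where "Pm m t e = mk m (sd (t * m) e) (3 * ix (t * m) e + 1)"
definition Qm :: "nat \<Rightarrow> nat \<Rightarrow> nat \<Rightarrow> vtx" where "Qm m t e = mk m (sd (t * m) e) (3 * ix (t * m) e + 2)"

lemma PQ_facts:
  assumes m: "m \<ge> 1" and e: "e < 2 * t * m"
  shows "Pm m t e \<in> Wf m t" "side (Pm m t e) = sd (t * m) e" "pos m (Pm m t e) = 3 * ix (t * m) e + 1"
    "Qm m t e \<in> Wf m t" "side (Qm m t e) = sd (t * m) e" "pos m (Qm m t e) = 3 * ix (t * m) e + 2"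
proof -
  have ixl: "ix (t * m) e < t * m" using e by (auto simp: ix_def)
  have s: "sd (t * m) e = 1 \<or> sd (t * m) e = 2" by (simp add: sd_def)
  have b1: "3 * ix (t * m) e + 1 < 3 * (t * m)" "3 * ix (t * m) e + 2 < 3 * (t * m)" using ixl by linarith+
  note f1 = mk_facts[OF m _ b1(1) s] and f2 = mk_facts[OF m _ b1(2) s]
  have "(3 * ix (t * m) e + 1) mod 3 \<noteq> 0" "(3 * ix (t * m) e + 2) mod 3 \<noteq> 0" by presburger+
  then show "Pm m t e \<in> Wf m t" "side (Pm m t e) = sd (t * m) e" "pos m (Pm m t e) = 3 * ix (t * m) e + 1"
    "Qm m t e \<in> Wf m t" "side (Qm m t e) = sd (t * m) e" "pos m (Qm m t e) = 3 * ix (t * m) e + 2"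
    using f1 f2 s by (auto simp: Pm_def Qm_def Wf_def)
qed

lemma sd_ix_inj: "e < 2 * t * m \<Longrightarrow> e' < 2 * t * m \<Longrightarrow> sd (t * m) e = sd (t * m) e' \<Longrightarrow> ix (t * m) e = ix (t * m) e' \<Longrightarrow> e = e'"
  by (auto simp: sd_def ix_def split: if_splits)

lemma Wf_repr:
  assumes m: "m \<ge> 1" and v: "v \<in> Wf m t"
  defines "ev \<equiv> (if side v = 1 then pos m v div 3 else pos m v div 3 + t * m)"
  shows "ev < 2 * t * m" "pos m v mod 3 = 1 \<Longrightarrow> v = Pm m t ev" "pos m v mod 3 = 2 \<Longrightarrow> v = Qm m t ev"
proof -
  have vV: "v \<in> V0 m t" and s0: "side v \<noteq> 0" and md: "pos m v mod 3 \<noteq> 0" using v by (auto simp: Wf_def)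
  note f = V0_facts(2)[OF m vV s0]
  have d: "pos m v div 3 < t * m" using f by linarith
  have "2 * t * m = t * m + t * m" by simp
  moreover have "ev \<le> pos m v div 3 + t * m" by (simp add: ev_def)
  ultimately show "ev < 2 * t * m" using d by linarith
  have sdv: "sd (t * m) ev = side v" and ixv: "ix (t * m) ev = pos m v div 3"
    using d f by (auto simp: ev_def sd_def ix_def)
  show "pos m v mod 3 = 1 \<Longrightarrow> v = Pm m t ev"
  proof -
    assume "pos m v mod 3 = 1"
    then have "3 * (pos m v div 3) + 1 = pos m v" by presburger
    then show "v = Pm m t ev" using f sdv ixv by (simp add: Pm_def)
  qed
  show "pos m v mod 3 = 2 \<Longrightarrow> v = Qm m t ev"
  proof -
    assume "pos m v mod 3 = 2"
    then have "3 * (pos m v div 3) + 2 = pos m v" by presburger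
    then show "v = Qm m t ev" using f sdv ixv by (simp add: Qm_def)
  qed
qed


lemma match_conds:
  assumes m: "m \<ge> 1"
  shows "Wf m t = Pm m t ` {..<2 * t * m} \<union> Qm m t ` {..<2 * t * m}"
    and "inj_on (Pm m t) {..<2 * t * m}"
    and "inj_on (Qm m t) {..<2 * t * m}"
    and "Pm m t ` {..<2 * t * m} \<inter> Qm m t ` {..<2 * t * m} = {}"
    and "\<And>u v. u \<in> Wf m t \<Longrightarrow> v \<in> Wf m t \<Longrightarrow>
           H m u v \<longleftrightarrow> (\<exists>e<2 * t * m. (u = Pm m t e \<and> v = Qm m t e) \<or> (u = Qm m t e \<and> v = Pm m t e))"
proof -
  let ?K = "2 * t * m"
  let ?ev = "\<lambda>v. (if side v = 1 then pos m v div 3 else pos m v div 3 + t * m)"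
  show "Wf m t = Pm m t ` {..<?K} \<union> Qm m t ` {..<?K}"
  proof
    show "Wf m t \<subseteq> Pm m t ` {..<?K} \<union> Qm m t ` {..<?K}"
    proof
      fix v assume v: "v \<in> Wf m t"
      note r = Wf_repr[OF m v]
      have "pos m v mod 3 \<noteq> 0" using v by (simp add: Wf_def)
      then have "pos m v mod 3 = 1 \<or> pos m v mod 3 = 2" by presburger
      then show "v \<in> Pm m t ` {..<?K} \<union> Qm m t ` {..<?K}" using r by blast
    qed
    show "Pm m t ` {..<?K} \<union> Qm m t ` {..<?K} \<subseteq> Wf m t"
      using PQ_facts[OF m] by auto
  qed
  show "inj_on (Pm m t) {..<?K}"
  proof (rule inj_onI)
    fix e e' assume e: "e \<in> {..<?K}" "e' \<in> {..<?K}" and eq: "Pm m t e = Pm m t e'"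
    have "side (Pm m t e) = side (Pm m t e')" "pos m (Pm m t e) = pos m (Pm m t e')" using eq by simp_all
    moreover have "e < ?K" "e' < ?K" using e by auto
    ultimately have "sd (t * m) e = sd (t * m) e'" "3 * ix (t * m) e + 1 = 3 * ix (t * m) e' + 1"
      using PQ_facts[OF m, of e t] PQ_facts[OF m, of e' t] by auto
    then show "e = e'" using sd_ix_inj[of e t m e'] \<open>e < ?K\<close> \<open>e' < ?K\<close> by simp
  qed
  show "inj_on (Qm m t) {..<?K}"
  proof (rule inj_onI)
    fix e e' assume e: "e \<in> {..<?K}" "e' \<in> {..<?K}" and eq: "Qm m t e = Qm m t e'"
    have "side (Qm m t e) = side (Qm m t e')" "pos m (Qm m t e) = pos m (Qm m t e')" using eq by simp_all
    moreover have "e < ?K" "e' < ?K" using e by auto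
    ultimately have "sd (t * m) e = sd (t * m) e'" "3 * ix (t * m) e + 2 = 3 * ix (t * m) e' + 2"
      using PQ_facts[OF m, of e t] PQ_facts[OF m, of e' t] by auto
    then show "e = e'" using sd_ix_inj[of e t m e'] \<open>e < ?K\<close> \<open>e' < ?K\<close> by simp
  qed
  show "Pm m t ` {..<?K} \<inter> Qm m t ` {..<?K} = {}"
  proof (rule ccontr)
    assume "Pm m t ` {..<?K} \<inter> Qm m t ` {..<?K} \<noteq> {}"
    then obtain e e' where e: "e < ?K" "e' < ?K" and eq: "Pm m t e = Qm m t e'" by auto
    have "pos m (Pm m t e) = pos m (Qm m t e')" using eq by simp
    then have "3 * ix (t * m) e + 1 = 3 * ix (t * m) e' + 2" using PQ_facts[OF m, of e t] PQ_facts[OF m, of e' t] e by simp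
    then show False by presburger
  qed
  fix u v assume u: "u \<in> Wf m t" and v: "v \<in> Wf m t"
  have su: "side u \<noteq> 0" "pos m u mod 3 \<noteq> 0" and sv: "side v \<noteq> 0" "pos m v mod 3 \<noteq> 0"
    using u v by (auto simp: Wf_def)
  have dir: "\<exists>e<?K. (x = Pm m t e \<and> y = Qm m t e)"
    if x: "x \<in> Wf m t" and y: "y \<in> Wf m t" and s: "side y = side x" and p: "pos m y = pos m x + 1" for x y
  proof -
    have "pos m x mod 3 \<noteq> 0" "pos m y mod 3 \<noteq> 0" using x y by (auto simp: Wf_def)
    then have p1: "pos m x mod 3 = 1" and p2: "pos m y mod 3 = 2" and pd: "pos m y div 3 = pos m x div 3"
      using p by presburger+
    have ee: "?ev y = ?ev x" using s pd by simp
    have 1: "?ev x < ?K" by (rule Wf_repr(1)[OF m x])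
    have 2: "x = Pm m t (?ev x)" by (rule Wf_repr(2)[OF m x p1])
    have "y = Qm m t (?ev y)" by (rule Wf_repr(3)[OF m y p2])
    then have 3: "y = Qm m t (?ev x)" by (simp only: ee)
    show ?thesis using 1 2 3 by blast
  qed
  show "H m u v \<longleftrightarrow> (\<exists>e<?K. (u = Pm m t e \<and> v = Qm m t e) \<or> (u = Qm m t e \<and> v = Pm m t e))"
  proof
    assume "H m u v"
    then have "side v = side u \<and> (pos m u = pos m v + 1 \<or> pos m v = pos m u + 1)"
      using su sv by (auto simp: H_def)
    then show "\<exists>e<?K. (u = Pm m t e \<and> v = Qm m t e) \<or> (u = Qm m t e \<and> v = Pm m t e)"
    proof -
      assume h: "side v = side u \<and> (pos m u = pos m v + 1 \<or> pos m v = pos m u + 1)"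
      show ?thesis
      proof (cases "pos m v = pos m u + 1")
        case True
        then show ?thesis using dir[OF u v] h by blast
      next
        case False
        then have "pos m u = pos m v + 1" "side u = side v" using h by auto
        then show ?thesis using dir[OF v u] by blast
      qed
    qed
  next
    assume "\<exists>e<?K. (u = Pm m t e \<and> v = Qm m t e) \<or> (u = Qm m t e \<and> v = Pm m t e)"
    then obtain e where e: "e < ?K" "(u = Pm m t e \<and> v = Qm m t e) \<or> (u = Qm m t e \<and> v = Pm m t e)" by blast
    have "sd (t * m) e \<noteq> 0" by (simp add: sd_def)
    then show "H m u v" using e PQ_facts[OF m e(1)] by (auto simp: H_def)
  qed
qed

theorem lemma3p2:
  fixes m t n :: nat
  assumes "m \<ge> 1" and "n = 3 * m + 1" and "t \<ge> 1"
  shows "(geom_realization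
              (indep_complex (Gverts n t - closed_nbhd (Gverts n t) (Gadj n t) (A t)) (Gadj n t)))
           homotopy_equivalent_space (nsphere (2 * t * m - 1))"
proof -
  have m: "m \<ge> 1" and n: "n = 3 * m + 1" and t: "t \<ge> 1" using assms by auto
  have tm: "t * m \<ge> 1" using m t by simp
  have symH: "\<forall>x y. H m x y \<longrightarrow> H m y x" using H_sym by blast
  have eqV: "Gverts n t - closed_nbhd (Gverts n t) (Gadj n t) (A t) = V0 m t"
    unfolding n by (rule V0_eq[OF m])
  have eqI: "indep_complex (V0 m t) (Gadj n t) = indep_complex (V0 m t) (H m)"
  proof (rule indep_cong)
    fix u v assume "u \<in> V0 m t" "v \<in> V0 m t"
    then have "u \<in> Gverts (3 * m + 1) t" "v \<in> Gverts (3 * m + 1) t" by (auto simp: V0_def)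
    then show "Gadj n t u v \<longleftrightarrow> H m u v" unfolding n by (rule adj_H[OF m])
  qed
  have finW: "finite (W m t k)" for k using finite_subset[OF W_sub finite_V0] .
  have chain: "k < t * m \<longrightarrow> geom_realization (indep_complex (W m t 0) (H m))
      homotopy_equivalent_space geom_realization (indep_complex (W m t k) (H m))" for k
  proof (induction k)
    case 0
    then show ?case by (simp add: homotopy_equivalent_space_refl)
  next
    case (Suc k)
    show ?case
    proof
      assume k: "Suc k < t * m"
      then have k1: "k + 1 < t * m" by simp
      have "geom_realization (indep_complex (W m t k) (H m))
          homotopy_equivalent_space geom_realization (indep_complex (W m t (Suc k)) (H m))"
        by (rule retract_lemma[OF finW step_conds(1)[OF m k1] step_conds(2)[OF m k1]
              step_conds(3)[OF m k1] symH step_conds(4)[OF m k1]])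
      then show "geom_realization (indep_complex (W m t 0) (H m))
          homotopy_equivalent_space geom_realization (indep_complex (W m t (Suc k)) (H m))"
        using Suc k by (meson Suc_lessD homotopy_eqv_trans)
    qed
  qed
  have h1: "geom_realization (indep_complex (W m t 0) (H m))
      homotopy_equivalent_space geom_realization (indep_complex (W m t (t * m - 1)) (H m))"
    using chain[of "t * m - 1"] tm by simp
  have h2: "geom_realization (indep_complex (W m t (t * m - 1)) (H m))
      homotopy_equivalent_space geom_realization (indep_complex (Wf m t) (H m))"
    by (rule retract_lemma[OF finW a_conds(1)[OF m t] a_conds(2)[OF m t] a_conds(3)[OF m t]
          symH a_conds(4)[OF m t]])
  have K: "2 * t * m \<ge> 1" using tm by simp
  have h3: "geom_realization (indep_complex (Wf m t) (H m)) homeomorphic_space nsphere (2 * t * m - 1)"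
    by (rule matching_sphere[OF K match_conds(1)[OF m] match_conds(2)[OF m] match_conds(3)[OF m]
          match_conds(4)[OF m] match_conds(5)[OF m]])
  have fin: "geom_realization (indep_complex (W m t 0) (H m)) homotopy_equivalent_space nsphere (2 * t * m - 1)"
    by (rule homotopy_eqv_trans[OF h1 homotopy_eqv_trans[OF h2 homeomorphic_imp_homotopy_equivalent_space[OF h3]]])
  then have fin': "geom_realization (indep_complex (V0 m t) (H m)) homotopy_equivalent_space nsphere (2 * t * m - 1)"
    unfolding W0[OF m] .
  show ?thesis unfolding eqV eqI by (rule fin')
qed

end
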